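(* Let $G=(V,E)$ and $H=(U,F)$ be finite simple graphs, each with $n$ vertices. Then the tree generation stage of the uniqueness tree algorithm (described in the context), which constructs the uniqueness tree $T(v)$ for every vertex $v$ of $G$ and of $H$, runs in time $O(n^6)$ in the worst case.
   Context: A simple graph is a finite, unweighted, undirected graph with no loops or multiple edges; the size $n$ of a graph is its number of vertices. Tree generation stage: for each of the two graphs and each vertex $v$ of it, build a rooted tree $T(v)$ whose nodes are labelled by vertices of the graph, level by level. Level $0$ consists of the root, labelled $v$. Given the current level, a node of that level is called unique if its label occurs exactly once among the labels of the nodes of that level. Each non-unique node becomes a leaf (no children); each unique node labelled $u$ receives one child for each neighbour $w$ of $u$ in the graph, labelled $w$; these children form the next level. This is repeated while some node on the current level is unique and the height of $T(v)$ is less than $n$. *)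

theory Defs
  imports Main "HOL-Library.Multiset"
begin

definition simple_graph :: "nat set \<Rightarrow> (nat \<Rightarrow> nat \<Rightarrow> bool) \<Rightarrow> bool" where
  "simple_graph V E \<longleftrightarrow> finite V \<and>
     (\<forall>u w. E u w \<longrightarrow> u \<in> V \<and> w \<in> V) \<and>
     (\<forall>u w. E u w \<longrightarrow> E w u) \<and> (\<forall>u. \<not> E u u)"

definition nbrs :: "(nat \<Rightarrow> nat \<Rightarrow> bool) \<Rightarrow> nat \<Rightarrow> nat set" where
  "nbrs E u = {w. E u w}"

text \<open>A level of the tree T(v) is represented by the multiset of labels of its nodes.
  A node labelled u is unique iff u occurs exactly once in the level.\<close>
definition unique_label :: "nat multiset \<Rightarrow> nat \<Rightarrow> bool" where
  "unique_label L u \<longleftrightarrow> count L u = 1"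

text \<open>Next level: each unique node labelled u gets one child per neighbour of u;
  non-unique nodes become leaves.\<close>
definition next_level :: "(nat \<Rightarrow> nat \<Rightarrow> bool) \<Rightarrow> nat multiset \<Rightarrow> nat multiset" where
  "next_level E L = (\<Sum>u\<in>{u. unique_label L u}. mset_set (nbrs E u))"

text \<open>Cost model (elementary operations) of the tree generation stage, starting at a level L
  of height h in a graph of size n.  Processing a level costs (size L)^2 for determining which
  nodes are unique (pairwise label comparison), plus one unit per created child.\<close>
function gen_cost :: "(nat \<Rightarrow> nat \<Rightarrow> bool) \<Rightarrow> nat \<Rightarrow> nat \<Rightarrow> nat multiset \<Rightarrow> nat" where
  "gen_cost E n h L =
     size L ^ 2 +
     (if h < n \<and> (\<exists>u. unique_label L u)
      then size (next_level E L) + gen_cost E n (Suc h) (next_level E L)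
      else 0)"
  by pat_completeness auto
termination
  by (relation "measure (\<lambda>(E, n, h, L). n - h)") auto

definition tree_generation_cost :: "nat set \<Rightarrow> (nat \<Rightarrow> nat \<Rightarrow> bool) \<Rightarrow> nat" where
  "tree_generation_cost V E = (\<Sum>v\<in>V. gen_cost E (card V) 0 {#v#})"

end

theory Submission
  imports Defs
begin

lemma next_size:
  assumes g: "simple_graph V E" and c: "card V = n"
  shows "size (next_level E L) \<le> n * n"
proof -
  have fV: "finite V" using g by (simp add: simple_graph_def)
  have nb: "nbrs E u \<subseteq> V" for u using g by (auto simp: simple_graph_def nbrs_def)
  have nbe: "u \<notin> V \<Longrightarrow> nbrs E u = {}" for u using g by (auto simp: simple_graph_def nbrs_def)
  have cn: "card (nbrs E u) \<le> n" for u using card_mono[OF fV nb] c by simp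
  define S where "S = {u. unique_label L u}"
  have fS: "finite S"
    by (rule finite_subset[of _ "set_mset L"]) (auto simp: S_def unique_label_def intro: count_inI)
  have "size (next_level E L) = (\<Sum>u\<in>S. card (nbrs E u))"
    by (simp add: next_level_def S_def)
  also have "\<dots> = (\<Sum>u\<in>S \<inter> V. card (nbrs E u))"
    by (rule sum.mono_neutral_right) (use fS nbe in auto)
  also have "\<dots> \<le> (\<Sum>u\<in>V. card (nbrs E u))"
    by (rule sum_mono2) (use fV in auto)
  also have "\<dots> \<le> (\<Sum>u\<in>V. n)" by (rule sum_mono) (rule cn)
  also have "\<dots> = n * n" using c by simp
  finally show ?thesis .
qed

lemma gen_bound:
  assumes g: "simple_graph V E" and c: "card V = n"
  shows "n - h = k \<Longrightarrow> size L \<le> n^2 + 1 \<Longrightarrow>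
     gen_cost E n h L \<le> (k + 1) * ((n^2+1)^2 + (n^2+1))"
proof (induction k arbitrary: h L)
  case 0
  then have "\<not> h < n" by simp
  then have "gen_cost E n h L = size L ^ 2" by simp
  also have "\<dots> \<le> (n^2+1)^2" using 0 by (simp add: power_mono)
  finally show ?case by simp
next
  case (Suc k)
  have ns: "size (next_level E L) \<le> n^2 + 1" using next_size[OF g c, of L] by (simp add: power2_eq_square)
  have ih: "gen_cost E n (Suc h) (next_level E L) \<le> (k + 1) * ((n^2+1)^2 + (n^2+1))"
    using Suc.IH[of "Suc h" "next_level E L"] Suc.prems ns by simp
  have sq: "size L ^ 2 \<le> (n^2+1)^2" using Suc.prems by (simp add: power_mono)
  have "gen_cost E n h L \<le> size L ^ 2 + (size (next_level E L) + gen_cost E n (Suc h) (next_level E L))"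
    by simp
  also have "\<dots> \<le> (n^2+1)^2 + ((n^2+1) + (k + 1) * ((n^2+1)^2 + (n^2+1)))"
    using sq ns ih by linarith
  also have "\<dots> = (Suc k + 1) * ((n^2+1)^2 + (n^2+1))" by (simp add: algebra_simps)
  finally show ?case .
qed

lemma tree_bound:
  assumes g: "simple_graph V E" and c: "card V = n"
  shows "tree_generation_cost V E \<le> 12 * n^6"
proof (cases "n = 0")
  case True
  then have "V = {}" using g c by (simp add: simple_graph_def)
  then show ?thesis by (simp add: tree_generation_cost_def)
next
  case False
  have each: "gen_cost E n 0 {#v#} \<le> (n + 1) * ((n^2+1)^2 + (n^2+1))" for v
    using gen_bound[OF g c, of 0 n "{#v#}"] by simp
  have "tree_generation_cost V E \<le> (\<Sum>v\<in>V. (n + 1) * ((n^2+1)^2 + (n^2+1)))"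
    unfolding tree_generation_cost_def using c each by (intro sum_mono) simp
  also have "\<dots> = n * ((n + 1) * ((n^2+1)^2 + (n^2+1)))" using c by simp
  also have "\<dots> \<le> n * ((2*n) * (4*n^4 + 2*n^4))"
  proof -
    have a: "n + 1 \<le> 2*n" using False by simp
    have b: "n^2 + 1 \<le> 2*n^2" using False by (simp add: Suc_le_eq)
    have b2: "(n^2+1)^2 \<le> 4*n^4" using power_mono[OF b, of 2] by (simp add: power_mult_distrib flip: power_mult)
    have b3: "2*n^2 \<le> 2*n^4" using False by (simp add: power_increasing)
    have "(n^2+1)^2 + (n^2+1) \<le> 4*n^4 + 2*n^4" using b b2 b3 by linarith
    then show ?thesis using a by (intro mult_le_mono2 mult_le_mono) auto
  qed
  also have "\<dots> = 12 * n^6" by (simp add: algebra_simps eval_nat_numeral)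
  finally show ?thesis .
qed

theorem lemma1:
  shows "\<exists>C::nat. \<forall>(n::nat) V E U F.
           simple_graph V E \<and> simple_graph U F \<and> card V = n \<and> card U = n \<longrightarrow>
           tree_generation_cost V E + tree_generation_cost U F \<le> C * n ^ 6"
proof (intro exI[of _ 24] allI impI)
  fix n V E U F assume h: "simple_graph V E \<and> simple_graph U F \<and> card V = n \<and> card U = n"
  then show "tree_generation_cost V E + tree_generation_cost U F \<le> 24 * n ^ 6"
    using tree_bound[of V E n] tree_bound[of U F n] by simp
qed

end
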